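(* For $\lambda>0$ let $m(\lambda):=\big|\{(t,x)\in(0,\infty)\times\mathbb{R}^3:u_{\mathrm{lin}}(t,x)>\lambda\}\big|$ (Lebesgue measure). Then $$m(\lambda)=\frac{4\pi}{3}\left(\frac{1}{2\lambda^3}-\frac{2}{(\lambda+2)^3}\right)1_{(0,2)}(\lambda).$$
   Context: Let $f(s):=\max\{1-|s|,0\}$ and define, with $r=|x|$, $u_{\mathrm{lin}}(t,x):=\dfrac{f(r-t)-f(r+t)}{r}$ on $\mathbb{R}\times\mathbb{R}^3$; this is a radial solution of the linear wave equation on $\mathbb{R}\times\mathbb{R}^3$ with initial data $u_{\mathrm{lin}}(0,x)=0$, $\partial_tu_{\mathrm{lin}}(0,x)=\frac{2}{|x|}1_{\{0<|x|\le1\}}$. *)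

theory Defs
  imports "HOL-Analysis.Analysis"
begin

definition tent :: "real \<Rightarrow> real" where
  "tent s = max (1 - \<bar>s\<bar>) 0"

text \<open>u_lin(t,x) = (f(r-t) - f(r+t))/r with r = |x|, x in R^3.
  At x = 0 the formula involves division by zero (Isabelle: value 0); this is a null set.\<close>
definition u_lin :: "real \<Rightarrow> real^3 \<Rightarrow> real" where
  "u_lin t x = (tent (norm x - t) - tent (norm x + t)) / norm x"

end

theory Submission
  imports Defs
begin


definition P :: "real \<Rightarrow> real \<Rightarrow> real \<Rightarrow> bool" where
 "P l t r \<longleftrightarrow> (r \<le> t \<and> t + l*r - r < 1) \<or> (t < r \<and> l*r < 2*t \<and> l*r + r < t+1)"

lemma char1_gen:
  fixes s t r :: real assumes "0<t" "0<r" "0 < s" "s < 2*r"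
  shows "s < (if r+t<1 then r+t-\<bar>r-t\<bar> else if \<bar>r-t\<bar><1 then 1-\<bar>r-t\<bar> else 0) \<longleftrightarrow>
     (r \<le> t \<and> t + s - r < 1) \<or> (t < r \<and> s < 2*t \<and> s + r < t+1)"
  using assms by (auto simp: abs_if split: if_splits)

lemma char1:
  fixes l t r :: real assumes "0<l" "l<2" "0<t" "0<r"
  shows "l * r < tent (r-t) - tent (r+t) \<longleftrightarrow> P l t r"
proof -
  have h: "0 < l*r" "l*r < 2*r" using assms by auto
  have D: "tent (r-t) - tent (r+t) = (if r+t<1 then r+t-\<bar>r-t\<bar> else if \<bar>r-t\<bar><1 then 1-\<bar>r-t\<bar> else 0)"
    using assms by (auto simp: tent_def)
  show ?thesis unfolding D P_def by (rule char1_gen[OF assms(3,4) h])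
qed

lemma R_gen:
 fixes l t r s q ls :: real
 assumes b: "0<l" "l<2" "0<t" "0<r"
 and f1: "s \<le> q \<longleftrightarrow> r \<le> t" and f1': "s < q \<longleftrightarrow> r < t"
 and f2: "s < 2*r" "q < 2*t" "0<s"
 and f3: "s < l - q \<longleftrightarrow> r < 1 - t"
 and f4: "q < l \<longleftrightarrow> t < 1"
 and f5: "t < 1 \<longrightarrow> l + 2*t < q + 2"
 and f6: "l \<ge> 1 \<and> r \<le> t \<longrightarrow> s - r \<le> q - t"
 and f7: "l < 1 \<longrightarrow> s < r"
 and f8: "s + r < t + 1 \<longrightarrow> ls + s < q + l"
 and f9: "ls + s < 2*q + 2*t \<longrightarrow> s < 2*t"
 and f10: "t < r \<and> l < 1 \<longrightarrow> t - q < r - s"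
 and f11: "t < r \<and> l > 1 \<longrightarrow> q - t < s - r"
 and f12: "r \<le> t \<and> l < 1 \<longrightarrow> q - t \<le> s - r"
 and f13: "l \<ge> 1 \<longrightarrow> r \<le> s"
 and f14: "l \<le> 1 \<longrightarrow> s \<le> r"
shows "q + 2*t \<le> l \<Longrightarrow> ((r \<le> t \<and> t + s - r < 1) \<or> (t < r \<and> s < 2*t \<and> s + r < t+1) \<longleftrightarrow> s < 2*t)"
  and "q + 2*t > l \<Longrightarrow> q < 1 \<Longrightarrow> t \<le> 1 \<Longrightarrow> ((r \<le> t \<and> t + s - r < 1) \<or> (t < r \<and> s < 2*t \<and> s + r < t+1) \<longleftrightarrow> s + r < t + 1)"
  and "l < 1 \<Longrightarrow> 1 < t \<Longrightarrow> q < 1 \<Longrightarrow> ((r \<le> t \<and> t + s - r < 1) \<or> (t < r \<and> s < 2*t \<and> s + r < t+1) \<longleftrightarrow> t - 1 < r - s \<and> s + r < t + 1)"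
  and "q \<ge> 1 \<Longrightarrow> t < 1 \<Longrightarrow> ((r \<le> t \<and> t + s - r < 1) \<or> (t < r \<and> s < 2*t \<and> s + r < t+1) \<longleftrightarrow> s - r < 1 - t)"
  and "q \<ge> 1 \<Longrightarrow> t \<ge> 1 \<Longrightarrow> \<not> ((r \<le> t \<and> t + s - r < 1) \<or> (t < r \<and> s < 2*t \<and> s + r < t+1))"
  subgoal using assms by (smt (verit))
  subgoal using assms by (smt (verit))
  subgoal using assms by (smt (verit))
  subgoal using assms by (smt (verit))
  subgoal using assms by (smt (verit))
  done


definition Bf :: "real \<Rightarrow> real \<Rightarrow> real" where
 "Bf l t = (if t \<le> l/(l+2) then 2*t/l else if t < 1/l then (t+1)/(l+1) else if t < 1 then (1-t)/(l-1) else 0)"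
definition Af :: "real \<Rightarrow> real \<Rightarrow> real" where
 "Af l t = (if 1 < t \<and> l < 1 then (t-1)/(1-l) else 0)"

lemma key2:
  fixes l t r :: real assumes b: "0<l" "l<2" "0<t" "0<r"
  shows "P l t r \<longleftrightarrow> Af l t < r \<and> r < Bf l t"
proof -
  have f1: "l*r \<le> l*t \<longleftrightarrow> r \<le> t" and f1': "l*r < l*t \<longleftrightarrow> r < t" using b by auto
  have f2: "l*r < 2*r" "l*t < 2*t" "0<l*r" using b by auto
  have f3: "l*r < l - l*t \<longleftrightarrow> r < 1 - t"
    using b mult_less_cancel_left_pos[of l r "1-t"] by (simp add: algebra_simps)
  have f4: "l*t < l \<longleftrightarrow> t < 1" using b mult_less_cancel_left_pos[of l t 1] by simp
  have f5: "t < 1 \<longrightarrow> l + 2*t < l*t + 2"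
  proof
    assume "t < 1" then have "0 < (2-l)*(1-t)" using b by auto
    then show "l + 2*t < l*t + 2" by (simp add: algebra_simps)
  qed
  have f6: "l \<ge> 1 \<and> r \<le> t \<longrightarrow> l*r - r \<le> l*t - t"
  proof
    assume a: "l \<ge> 1 \<and> r \<le> t" then have "(l-1)*r \<le> (l-1)*t" by (intro mult_left_mono) auto
    then show "l*r - r \<le> l*t - t" by (simp add: algebra_simps)
  qed
  have f7: "l < 1 \<longrightarrow> l*r < r" using b by auto
  have f8: "l*r + r < t + 1 \<longrightarrow> l*(l*r) + l*r < l*t + l"
  proof
    assume "l*r + r < t + 1" then have "l*(l*r + r) < l*(t+1)" using b by simp
    then show "l*(l*r) + l*r < l*t + l" by (simp add: algebra_simps)
  qed
  have f9: "l*(l*r) + l*r < 2*(l*t) + 2*t \<longrightarrow> l*r < 2*t"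
  proof
    assume "l*(l*r) + l*r < 2*(l*t) + 2*t" then have "(l+1)*(l*r) < (l+1)*(2*t)" by (simp add: algebra_simps)
    then show "l*r < 2*t" using b by (simp add: mult_less_cancel_left_pos)
  qed
  have f10: "t < r \<and> l < 1 \<longrightarrow> t - l*t < r - l*r"
  proof
    assume "t < r \<and> l < 1" then have "(1-l)*t < (1-l)*r" by auto
    then show "t - l*t < r - l*r" by (simp add: algebra_simps)
  qed
  have f11: "t < r \<and> l > 1 \<longrightarrow> l*t - t < l*r - r"
  proof
    assume "t < r \<and> l > 1" then have "(l-1)*t < (l-1)*r" by auto
    then show "l*t - t < l*r - r" by (simp add: algebra_simps)
  qed
  have f12: "r \<le> t \<and> l < 1 \<longrightarrow> l*t - t \<le> l*r - r"
  proof
    assume "r \<le> t \<and> l < 1" then have "(1-l)*r \<le> (1-l)*t" by (intro mult_left_mono) auto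
    then show "l*t - t \<le> l*r - r" by (simp add: algebra_simps)
  qed
  have f13: "l \<ge> 1 \<longrightarrow> r \<le> l*r" using b by auto
  have f14: "l \<le> 1 \<longrightarrow> l*r \<le> r" using b by auto
  have f15: "l \<le> 1 \<longrightarrow> l*t \<le> t" using b by auto
  note R = R_gen[OF b f1 f1' f2 f3 f4 f5 f6 f7 f8 f9 f10 f11 f12 f13 f14]
  have cA: "t \<le> l/(l+2) \<longleftrightarrow> l*t + 2*t \<le> l" using b by (simp add: le_divide_eq algebra_simps)
  have cB: "t < 1/l \<longleftrightarrow> l*t < 1" using b by (simp add: less_divide_eq algebra_simps)
  show ?thesis
  proof (cases "l*t + 2*t \<le> l")
    case True
    then have "t < 1" using f2 f4 f5 by linarith
    then have "Af l t = 0" "Bf l t = 2*t/l" using True cA by (auto simp: Af_def Bf_def)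
    moreover have "r < 2*t/l \<longleftrightarrow> l*r < 2*t" using b by (simp add: less_divide_eq algebra_simps)
    ultimately show ?thesis using R(1)[OF True] b unfolding P_def by auto
  next
    case nA: False
    show ?thesis
    proof (cases "l*t < 1")
      case lt: True
      show ?thesis
      proof (cases "t \<le> 1")
        case True
        then have "Af l t = 0" "Bf l t = (t+1)/(l+1)" using nA lt cA cB by (auto simp: Af_def Bf_def)
        moreover have "r < (t+1)/(l+1) \<longleftrightarrow> l*r + r < t + 1" using b by (simp add: less_divide_eq algebra_simps)
        ultimately show ?thesis using R(2)[OF _ lt True] nA b unfolding P_def by auto
      next
        case False
        then have l1: "l < 1" using lt f13 f15 b
          by (metis linorder_not_le mult_less_cancel_left_pos mult.right_neutral less_trans)
        have "Af l t = (t-1)/(1-l)" "Bf l t = (t+1)/(l+1)" using nA lt cA cB False l1 by (auto simp: Af_def Bf_def)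
        moreover have "r < (t+1)/(l+1) \<longleftrightarrow> l*r + r < t + 1" using b by (simp add: less_divide_eq algebra_simps)
        moreover have "(t-1)/(1-l) < r \<longleftrightarrow> t - 1 < r - l*r" using b l1 by (simp add: divide_less_eq algebra_simps)
        ultimately show ?thesis using R(3)[OF l1 _ lt] False unfolding P_def by auto
      qed
    next
      case nlt: False
      show ?thesis
      proof (cases "t < 1")
        case True
        have l1: "l > 1" using True nlt f15 by linarith
        have "Af l t = 0" "Bf l t = (1-t)/(l-1)" using nA nlt cA cB True by (auto simp: Af_def Bf_def)
        moreover have "r < (1-t)/(l-1) \<longleftrightarrow> l*r - r < 1 - t" using b l1 by (simp add: less_divide_eq algebra_simps)
        ultimately show ?thesis using R(4)[OF _ True] nlt b unfolding P_def by auto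
      next
        case False
        have "Bf l t = 0" using nA nlt cA cB False by (auto simp: Bf_def)
        then show ?thesis using R(5) nlt False b unfolding P_def by auto
      qed
    qed
  qed
qed


lemma annulus:
  fixes a b :: real assumes "0 \<le> a"
  shows "emeasure lborel {x::real^3. a < norm x \<and> norm x < b} = ennreal (4*pi/3 * (max a b ^ 3 - a ^ 3))"
proof (cases "b \<le> a")
  case True
  then have "{x::real^3. a < norm x \<and> norm x < b} = {}" by auto
  then show ?thesis using True by (simp only:) (simp add: max_def)
next
  case False
  have eq: "{x::real^3. a < norm x \<and> norm x < b} = ball 0 b - cball 0 a"
    by (auto simp: dist_norm)
  have "emeasure lborel (ball (0::real^3) b - cball 0 a) = emeasure lborel (ball (0::real^3) b) - emeasure lborel (cball (0::real^3) a)"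
    apply (rule emeasure_Diff)
    using False assms by (auto simp: emeasure_cball)
  also have "\<dots> = ennreal (4*pi/3 * b^3) - ennreal (4*pi/3 * a^3)"
    using False assms by (simp add: emeasure_cball emeasure_ball unit_ball_vol_3)
  also have "\<dots> = ennreal (4*pi/3 * (b^3 - a^3))"
    using False assms by (subst ennreal_minus) (auto simp: right_diff_distrib)
  finally show ?thesis using eq False by (simp add: max_def)
qed

lemma fub:
  fixes S :: "(real \<times> (real^3)) set"
  assumes "S \<in> sets (lborel \<Otimes>\<^sub>M lborel)"
  shows "emeasure lborel S = (\<integral>\<^sup>+t. emeasure lborel (Pair t -` S) \<partial>lborel)"
proof -
  have "emeasure (lborel :: (real \<times> (real^3)) measure) S = emeasure (lborel \<Otimes>\<^sub>M lborel) S"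
    by (simp add: lborel_prod)
  also have "\<dots> = (\<integral>\<^sup>+t. emeasure lborel (Pair t -` S) \<partial>lborel)"
    by (rule lborel.emeasure_pair_measure_alt) (rule assms)
  finally show ?thesis .
qed

lemma meas: "{p :: real \<times> (real^3). fst p > 0 \<and> u_lin (fst p) (snd p) > lam} \<in> sets (lborel \<Otimes>\<^sub>M lborel)"
proof -
  have "Measurable.pred (lborel \<Otimes>\<^sub>M lborel) (\<lambda>p::real \<times> (real^3). 0 < fst p \<and> lam < u_lin (fst p) (snd p))"
    unfolding u_lin_def tent_def by measurable
  then show ?thesis by (simp add: pred_def space_pair_measure)
qed

definition G :: "real \<Rightarrow> real \<Rightarrow> real" where
 "G l t = (max (Af l t) (Bf l t))^3 - (Af l t)^3"

lemma Af_nonneg: "0 < l \<Longrightarrow> 0 \<le> Af l t"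
  by (auto simp: Af_def)

lemma G_nonneg: "0 < l \<Longrightarrow> 0 \<le> G l t"
  unfolding G_def using Af_nonneg[of l t] by (auto intro!: power_mono simp: max_def)

lemma G_zero: assumes "0 < l" "l < 2" shows "G l 0 = 0"
  using assms by (simp add: G_def Af_def Bf_def)

lemma G_out: assumes "0 < l" "l < 2" "t > max 1 (1/l)" shows "G l t = 0"
proof -
  have h: "l/(l+2) < 1" using assms by simp
  have "t > 1" "t > 1/l" using assms by auto
  then have "\<not> t \<le> l/(l+2)" "\<not> t < 1/l" "\<not> t < 1" using h by linarith+
  then have "Bf l t = 0" by (simp add: Bf_def)
  then show ?thesis using Af_nonneg[of l t] assms by (simp add: G_def max_def)
qed

lemma piece:
  fixes F f g :: "real \<Rightarrow> real"
  assumes "a \<le> b" "\<And>x. (F has_real_derivative f x) (at x)" "\<And>x. x \<in> {a<..<b} \<Longrightarrow> g x = f x"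
  shows "(g has_integral (F b - F a)) {a..b}"
proof -
  have "(f has_integral F b - F a) {a..b}"
    by (rule fundamental_theorem_of_calculus[OF assms(1)])
       (use assms(2) has_real_derivative_iff_has_vector_derivative has_vector_derivative_at_within in blast)
  then show ?thesis
    using has_integral_spike_finite[of "{a,b}" "{a..b}" g f] assms(3) by auto
qed

lemma dpow: "((\<lambda>t. k * (t + a)^4/4) has_real_derivative k*(t+a)^3) (at t)"
  by (auto intro!: derivative_eq_intros)


lemma G_integral:
  fixes l :: real assumes l: "0 < l" "l < 2"
  shows "(G l has_integral (1/(2*l^3) - 2/(l+2)^3)) {0..max 1 (1/l)}"
proof -
  define c where "c = l/(l+2)"
  define d where "d = 1/l"
  define k1 where "k1 = (2/l)^3"
  define k2 where "k2 = 1/(l+1)^3"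
  define k3 where "k3 = 1/(1-l)^3"
  define F1 where "F1 = (\<lambda>t::real. k1*(t+0)^4/4)"
  define F2 where "F2 = (\<lambda>t::real. k2*(t+1)^4/4)"
  define F3 where "F3 = (\<lambda>t::real. k3*(t+ -1)^4/4)"
  have c1: "c < 1" "0 < c" using l by (auto simp: c_def)
  have cd: "c < d"
  proof -
    have "0 < (2-l)*(l+1)" using l by auto
    then have "l*l < l + 2" by (simp add: algebra_simps)
    then show ?thesis using l by (simp add: c_def d_def field_simps)
  qed
  have d0: "0 < d" using l by (simp add: d_def)
  have cB: "\<And>t. t < d \<longleftrightarrow> l*t < 1" using l by (simp add: d_def less_divide_eq algebra_simps)
  have E1: "G l t = k1*(t+0)^3" if "t \<in> {0<..<c}" for t
  proof -
    have "t < 1" "t \<le> l/(l+2)" using that c1 by (auto simp: c_def)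
    then have "Af l t = 0" "Bf l t = 2*t/l" by (auto simp: Af_def Bf_def)
    moreover have "0 \<le> 2*t/l" using that l by auto
    ultimately show ?thesis by (simp add: G_def k1_def power_divide power_mult_distrib)
  qed
  have E2: "G l t = k2*(t+1)^3" if "c < t" "t < d" "t \<le> 1" for t
  proof -
    have "\<not> t \<le> l/(l+2)" "t < 1/l" using that by (auto simp: c_def d_def)
    then have "Af l t = 0" "Bf l t = (t+1)/(l+1)" using that by (auto simp: Af_def Bf_def)
    moreover have "0 \<le> (t+1)/(l+1)" using that l c1 by auto
    ultimately show ?thesis by (simp add: G_def k2_def power_divide)
  qed
  have E3: "G l t = k3*(t+ -1)^3" if "1 \<le> l" "d < t" "t < 1" for t
  proof -
    have "\<not> t \<le> l/(l+2)" "\<not> t < 1/l" using that cd by (auto simp: c_def d_def)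
    then have "Af l t = 0" "Bf l t = (1-t)/(l-1)" using that by (auto simp: Af_def Bf_def)
    moreover have "0 \<le> (1-t)/(l-1)" using that l by auto
    moreover have "((1-t)/(l-1))^3 = k3*(t+ -1)^3"
    proof -
      have "(1-t)/(l-1) = (-(t + -1))/(-(1-l))" by simp
      also have "\<dots> = (t + -1)/(1-l)" by (rule minus_divide_divide)
      finally show ?thesis by (simp add: k3_def power_divide)
    qed
    ultimately show ?thesis by (simp add: G_def)
  qed
  have E4: "G l t = k2*(t+1)^3 - k3*(t+ -1)^3" if "l < 1" "1 < t" "t < d" for t
  proof -
    have "\<not> t \<le> l/(l+2)" "t < 1/l" using that c1 by (auto simp: c_def d_def)
    then have A: "Af l t = (t-1)/(1-l)" "Bf l t = (t+1)/(l+1)" using that by (auto simp: Af_def Bf_def)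
    have "l*t < 1" using that cB by auto
    then have "(t-1)*(l+1) < (t+1)*(1-l)" by (simp add: algebra_simps)
    then have "(t-1)/(1-l) < (t+1)/(l+1)" using that l by (simp add: divide_simps)
    then show ?thesis unfolding G_def A using that
      by (simp add: k2_def k3_def power_divide max_def)
  qed
  have I1: "(G l has_integral (F1 c - F1 0)) {0..c}"
    by (rule piece) (use c1 E1 dpow[of k1 0, simplified] in \<open>auto simp: F1_def\<close>)
  have vF1: "F1 c - F1 0 = 2*l/(l+2)^4"
    using l by (simp add: F1_def k1_def c_def power_divide field_simps) (simp add: eval_nat_numeral algebra_simps)
  have vF2d: "F2 d = (l+1)/(4*l^4)"
    using l by (simp add: F2_def k2_def d_def power_divide field_simps) (simp add: eval_nat_numeral algebra_simps)
  have vF2c: "F2 c = 4*(l+1)/(l+2)^4"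
    using l by (simp add: F2_def k2_def c_def power_divide field_simps) (simp add: eval_nat_numeral algebra_simps)
  have vF3d: "F3 d = (1-l)/(4*l^4)"
  proof (cases "l = 1")
    case True then show ?thesis by (simp add: F3_def k3_def d_def)
  next
    case False then show ?thesis
      using l by (simp add: F3_def k3_def d_def power_divide field_simps) (simp add: eval_nat_numeral algebra_simps)
  qed
  have vF3one: "F3 1 = 0" by (simp add: F3_def)
  have fin: "2*l/(l+2)^4 + ((l+1)/(4*l^4) - 4*(l+1)/(l+2)^4) - (1-l)/(4*l^4) = 1/(2*l^3) - 2/(l+2)^3"
  proof -
    have a: "(l+1)/(4*l^4) - (1-l)/(4*l^4) = 1/(2*l^3)" using l by (simp add: field_simps power_def)
    have b: "2*l/(l+2)^4 - 4*(l+1)/(l+2)^4 = - 2/(l+2)^3"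
    proof -
      have "2*l/(l+2)^4 - 4*(l+1)/(l+2)^4 = (2*l - 4*(l+1))/(l+2)^4" by (rule diff_divide_distrib[symmetric])
      also have "2*l - 4*(l+1) = -2*(l+2)" by simp
      also have "(-2*(l+2))/(l+2)^4 = -2/(l+2)^3" using l by (simp add: divide_simps) (simp add: eval_nat_numeral algebra_simps)
      finally show ?thesis by simp
    qed
    show ?thesis using a b by simp
  qed
  show ?thesis
  proof (cases "1 \<le> l")
    case True
    then have d1: "d \<le> 1" and m: "max 1 (1/l) = 1" using l by (auto simp: d_def)
    have I2: "(G l has_integral (F2 d - F2 c)) {c..d}"
      by (rule piece) (use cd d1 E2 dpow in \<open>auto simp: F2_def\<close>)
    have I3: "(G l has_integral (F3 1 - F3 d)) {d..1}"
      by (rule piece) (use d1 E3 True dpow[of k3 "-1", simplified] in \<open>auto simp: F3_def\<close>)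
    have "(G l has_integral ((F1 c - F1 0) + (F2 d - F2 c) + (F3 1 - F3 d))) {0..1}"
      by (rule has_integral_combine[OF _ d1 has_integral_combine[OF _ _ I1 I2] I3]) (use c1 cd d0 in auto)
    moreover have e: "(F1 c - F1 0) + (F2 d - F2 c) + (F3 1 - F3 d) = 1/(2*l^3) - 2/(l+2)^3"
      unfolding vF1 vF2d vF2c vF3d vF3one using fin by linarith
    ultimately show ?thesis by (simp only: m e)
  next
    case False
    then have d1: "1 < d" and m: "max 1 (1/l) = d" using l by (auto simp: d_def)
    have I2: "(G l has_integral (F2 1 - F2 c)) {c..1}"
      by (rule piece) (use c1 d1 E2 dpow in \<open>auto simp: F2_def\<close>)
    have I3: "(G l has_integral ((F2 d - F3 d) - (F2 1 - F3 1))) {1..d}"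
      by (rule piece[where f="\<lambda>t. k2*(t+1)^3 - k3*(t+ -1)^3"])
         (use d1 E4 False dpow[of k3 "-1", simplified] in \<open>auto simp: F2_def F3_def intro!: DERIV_diff dpow\<close>)
    have "(G l has_integral ((F1 c - F1 0) + (F2 1 - F2 c) + ((F2 d - F3 d) - (F2 1 - F3 1)))) {0..d}"
      by (rule has_integral_combine[OF _ _ has_integral_combine[OF _ _ I1 I2] I3]) (use c1 d1 in auto)
    moreover have e: "(F1 c - F1 0) + (F2 1 - F2 c) + ((F2 d - F3 d) - (F2 1 - F3 1)) = 1/(2*l^3) - 2/(l+2)^3"
      unfolding vF1 vF2d vF2c vF3d vF3one using fin by linarith
    ultimately show ?thesis by (simp only: m e)
  qed
qed


lemma Dform: fixes t r :: real assumes "0 < t" "0 < r"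
  shows "tent (r-t) - tent (r+t) = (if r+t<1 then r+t-\<bar>r-t\<bar> else if \<bar>r-t\<bar><1 then 1-\<bar>r-t\<bar> else 0)"
  using assms by (auto simp: tent_def)

lemma u_bound: assumes "0 < t" shows "u_lin t x \<le> 2"
proof (cases "norm x = 0")
  case True then show ?thesis by (simp add: u_lin_def)
next
  case False
  then have r: "0 < norm x" by simp
  have "tent (norm x - t) - tent (norm x + t) \<le> 2 * norm x"
    unfolding Dform[OF assms r] by (auto simp: abs_if)
  then show ?thesis using r by (simp add: u_lin_def divide_le_eq)
qed

lemma xsection: fixes l t :: real assumes l: "0 < l" "l < 2" and t: "0 < t"
  shows "{x::real^3. l < u_lin t x} = {x. Af l t < norm x \<and> norm x < Bf l t}"
proof (intro Collect_cong)
  fix x :: "real^3"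
  show "l < u_lin t x \<longleftrightarrow> Af l t < norm x \<and> norm x < Bf l t"
  proof (cases "norm x = 0")
    case True then show ?thesis using l Af_nonneg[of l t] by (simp add: u_lin_def)
  next
    case False
    then have r: "0 < norm x" by simp
    have "l < u_lin t x \<longleftrightarrow> l * norm x < tent (norm x - t) - tent (norm x + t)"
      using r by (simp add: u_lin_def less_divide_eq)
    also have "\<dots> \<longleftrightarrow> P l t (norm x)" by (rule char1[OF l t r])
    also have "\<dots> \<longleftrightarrow> Af l t < norm x \<and> norm x < Bf l t" by (rule key2[OF l t r])
    finally show ?thesis .
  qed
qed

theorem lemma3p1:
  fixes lam :: real
  assumes "lam > 0"
  shows "emeasure lborel {p :: real \<times> (real^3). fst p > 0 \<and> u_lin (fst p) (snd p) > lam}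
    = ennreal (4 * pi / 3 * (1 / (2 * lam ^ 3) - 2 / (lam + 2) ^ 3) * indicator {0<..<2} lam)"
proof (cases "lam < 2")
  case False
  have E: "{p :: real \<times> (real^3). fst p > 0 \<and> u_lin (fst p) (snd p) > lam} = {}"
  proof -
    { fix p :: "real \<times> (real^3)" assume "0 < fst p" "lam < u_lin (fst p) (snd p)"
      then have False using u_bound[of "fst p" "snd p"] False by linarith }
    then show ?thesis by blast
  qed
  show ?thesis using False by (subst E) simp
next
  case True
  note l = assms True
  define S where "S = {p :: real \<times> (real^3). fst p > 0 \<and> u_lin (fst p) (snd p) > lam}"
  define T where "T = max 1 (1/lam)"
  have sec: "emeasure lborel (Pair t -` S) = ennreal (4*pi/3 * G lam t) * indicator {0..T} t" for t
  proof (cases "0 < t")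
    case True
    have "Pair t -` S = {x. Af lam t < norm x \<and> norm x < Bf lam t}"
      using xsection[OF l True] True by (auto simp: S_def)
    then have "emeasure lborel (Pair t -` S) = ennreal (4*pi/3 * G lam t)"
      using annulus[OF Af_nonneg[OF l(1)]] by (simp add: G_def)
    moreover have "t > T \<Longrightarrow> G lam t = 0" using G_out[OF l] by (simp add: T_def)
    ultimately show ?thesis using True by (auto simp: indicator_def)
  next
    case False
    have "Pair t -` S = {}" using False by (auto simp: S_def)
    moreover have "t = 0 \<Longrightarrow> G lam t = 0" using G_zero[OF l] by simp
    ultimately show ?thesis using False by (auto simp: indicator_def)
  qed
  have "emeasure lborel S = (\<integral>\<^sup>+t. emeasure lborel (Pair t -` S) \<partial>lborel)"
    unfolding S_def by (rule fub[OF meas])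
  also have "\<dots> = (\<integral>\<^sup>+t. ennreal (4*pi/3 * G lam t) * indicator {0..T} t \<partial>lborel)"
    by (simp add: sec)
  also have "\<dots> = ennreal (4*pi/3 * (1/(2*lam^3) - 2/(lam+2)^3))"
  proof (rule nn_integral_has_integral_lebesgue')
    show "\<And>x. x \<in> {0..T} \<Longrightarrow> 0 \<le> 4*pi/3 * G lam x" using G_nonneg[OF l(1)] by simp
    show "((\<lambda>t. 4*pi/3 * G lam t) has_integral (4*pi/3 * (1/(2*lam^3) - 2/(lam+2)^3))) {0..T}"
      unfolding T_def by (rule has_integral_mult_right[OF G_integral[OF l]])
  qed
  finally show ?thesis using l by (simp add: S_def)
qed

end
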